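(* Let $a$ and $b$ be coprime odd integers and let $\beta\geq2$ be an integer. The following are equivalent: (1) $1\notin G_{(a,b)}(\beta)$; (2) $2^\beta\nmid(a+b)$; (3) $n\notin G_{(a,b)}(\beta)$ for all odd natural numbers $n$.
   Context: For coprime nonzero integers $a,b$ and an integer $\beta\geq0$, $G_{(a,b)}(\beta)$ is the set of positive integers $d$ such that $2^\beta d\mid(a^k+b^k)$ for some positive integer $k$. *)

theory Defs
  imports Main
begin

definition G :: "int \<Rightarrow> int \<Rightarrow> nat \<Rightarrow> nat set" where
  "G a b \<beta> = {d. d > 0 \<and> (\<exists>k::nat. k > 0 \<and> (2::int) ^ \<beta> * int d dvd a ^ k + b ^ k)}"

end

theory Submission
  imports Defs
begin

lemma odd_pow_factor:
  fixes a b :: int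
  assumes "odd a" "odd b"
  shows "\<exists>q. odd q \<and> a^(2*m+1) + b^(2*m+1) = (a+b)*q"
proof (induction m)
  case 0 thus ?case by (rule exI[of _ 1]) simp
next
  case (Suc m)
  then obtain q where q: "odd q" "a^(2*m+1) + b^(2*m+1) = (a+b)*q" by blast
  have e: "a^(2*Suc m+1) + b^(2*Suc m+1) = a^2*(a^(2*m+1) + b^(2*m+1)) + b^(2*m+1)*((b-a)*(b+a))"
    by (simp add: algebra_simps power_add power2_eq_square)
  have "odd (a^2*q + b^(2*m+1)*(b-a))" using q(1) assms by simp
  moreover have "a^(2*Suc m+1) + b^(2*Suc m+1) = (a+b)*(a^2*q + b^(2*m+1)*(b-a))"
    unfolding e q(2) by (simp add: algebra_simps)
  ultimately show ?case by blast
qed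

lemma even_pow_mod4:
  fixes a :: int
  assumes "odd a"
  shows "(a^(2*m)) mod 4 = 1"
proof -
  obtain c where c: "a = 2*c+1" using assms oddE by blast
  define d where "d = c*c+c"
  have "a^2 = 1 + d*4" unfolding c d_def by (simp add: algebra_simps power2_eq_square)
  hence "a^2 mod 4 = 1" by (simp only: mod_mult_self2) simp
  hence "((a^2)^m) mod 4 = 1^m mod 4" by (metis power_mod)
  thus ?thesis by (simp add: power_mult)
qed

lemma key:
  fixes a b :: int and \<beta> k :: nat
  assumes "odd a" "odd b" "\<beta> \<ge> 2" "k > 0"
  shows "(2::int)^\<beta> dvd a^k + b^k \<longleftrightarrow> odd k \<and> (2::int)^\<beta> dvd a + b"
proof (cases "even k")
  case True
  then obtain m where k: "k = 2*m" by blast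
  have "(a^k + b^k) mod 4 = 2"
    using even_pow_mod4[OF assms(1), of m] even_pow_mod4[OF assms(2), of m] unfolding k
    by (simp add: mod_add_eq[symmetric])
  hence "\<not> 4 dvd a^k + b^k" by (simp add: dvd_eq_mod_eq_0)
  moreover have "4 dvd (2::int)^\<beta>"
    using le_imp_power_dvd[OF assms(3), of "2::int"] by simp
  ultimately show ?thesis using True dvd_trans by blast
next
  case False
  then obtain m where k: "k = 2*m+1" using oddE by blast
  obtain q where q: "odd q" "a^k + b^k = (a+b)*q" using odd_pow_factor[OF assms(1,2)] k by blast
  have "coprime ((2::int)^\<beta>) q" using q(1) by simp
  hence "(2::int)^\<beta> dvd (a+b)*q \<longleftrightarrow> (2::int)^\<beta> dvd a+b"
    using coprime_dvd_mult_left_iff by blast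
  thus ?thesis using False q(2) by simp
qed

theorem corollary2p10:
  fixes a b :: int and \<beta> :: nat
  assumes "coprime a b" and "odd a" and "odd b" and "\<beta> \<ge> 2"
  shows "((1::nat) \<notin> G a b \<beta> \<longleftrightarrow> \<not> ((2::int) ^ \<beta> dvd a + b))
       \<and> (\<not> ((2::int) ^ \<beta> dvd a + b) \<longleftrightarrow> (\<forall>n::nat. odd n \<longrightarrow> n \<notin> G a b \<beta>))"
proof -
  have A: "(1::nat) \<in> G a b \<beta> \<longleftrightarrow> (2::int) ^ \<beta> dvd a + b"
  proof
    assume "1 \<in> G a b \<beta>"
    then obtain k where "k > 0" "(2::int)^\<beta> dvd a^k + b^k" unfolding G_def by auto
    thus "(2::int) ^ \<beta> dvd a + b" using key[OF assms(2,3,4)] by blast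
  next
    assume "(2::int) ^ \<beta> dvd a + b"
    thus "1 \<in> G a b \<beta>" unfolding G_def by (auto intro!: exI[of _ 1])
  qed
  have B: "n \<notin> G a b \<beta>" if "\<not> (2::int) ^ \<beta> dvd a + b" for n
  proof
    assume "n \<in> G a b \<beta>"
    then obtain k where "k > 0" "(2::int)^\<beta> * int n dvd a^k + b^k" unfolding G_def by auto
    hence "(2::int)^\<beta> dvd a^k + b^k" using dvd_mult_left by blast
    thus False using key[OF assms(2,3,4) \<open>k>0\<close>] that by blast
  qed
  show ?thesis using A B by (metis odd_one)
qed

end
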